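(* Let $\theta\in\mathrm{Irr}(N)$, let $N\le K\le\mathrm{Stab}_G(\theta)$, and let $\hat\theta$ be a strong extension of $\theta$ to $K$. Then for every $x\in K$ there exists $n\in N$ such that $\hat\theta(xn)\neq0$. Consequently, if $N\le L\le\mathrm{Stab}_G(\tilde\theta)$ normalises $K$, $g\in L$, $\psi_g\in\mathrm{Lin}(G)$ satisfies ${}^g\theta=\theta\,\psi_g|_N$, and $\mu:K\to\mathbb{C}^\times$ is a function constant on cosets of $N$ with ${}^g\hat\theta=\hat\theta\cdot\psi_g|_K\cdot\mu$, then $\mu$ is uniquely determined by $gN$, $\hat\theta$ and $\psi_g|_K$.
   Context: $G$ is a profinite group, $N$ an open normal subgroup; $\mathrm{Irr}$ and $\mathrm{Lin}$ denote continuous irreducible, resp. degree-one, complex characters. $\tilde\theta$ denotes the $G$-twist class $\{\theta\psi|_N:\psi\in\mathrm{Lin}(G)\}$ of $\theta\in\mathrm{Irr}(N)$, and $G$ acts on these classes via conjugation ${}^g\theta(n)=\theta(g^{-1}ng)$. A projective representation of $K$ is a map $\Pi:K\to\mathrm{GL}_m(\mathbb{C})$ with $\Pi(x)\Pi(y)=\alpha(x,y)\Pi(xy)$ for a 2-cocycle $\alpha:K\times K\to\mathbb{C}^\times$ (its factor set); its projective character is $x\mapsto\mathrm{Tr}\,\Pi(x)$. If $\Theta$ is a representation of $N$ affording $\theta$ and $K$ fixes $\theta$, a strong extension of $\Theta$ to $K$ is a projective representation $\Pi$ of $K$ with $\Pi(xn)=\Pi(x)\Theta(n)$ and $\Pi(nx)=\Theta(n)\Pi(x)$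 for all $x\in K$, $n\in N$; a strong extension of $\theta$ to $K$ is the projective character of such a $\Pi$. For a function $f$ on $K$, ${}^gf(x)=f(g^{-1}xg)$; products of functions are pointwise. *)

theory Defs
  imports "HOL-Analysis.Analysis" "HOL-Algebra.Coset" "Jordan_Normal_Form.Matrix"
begin

definition profinite_group :: "('a, 'b) monoid_scheme \<Rightarrow> 'a topology \<Rightarrow> bool" where
  "profinite_group G T \<longleftrightarrow>
     group G \<and> topspace T = carrier G \<and>
     continuous_map (prod_topology T T) T (\<lambda>(x, y). x \<otimes>\<^bsub>G\<^esub> y) \<and>
     continuous_map T T (\<lambda>x. inv\<^bsub>G\<^esub> x) \<and>
     compact_space T \<and> Hausdorff_space T \<and>
     (\<forall>x \<in> topspace T. connected_component_of_set T x = {x})"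

definition mat_trace :: "complex mat \<Rightarrow> complex" where
  "mat_trace A = (\<Sum>i<dim_row A. A $$ (i, i))"

text \<open>A continuous representation of degree m of the subgroup H (with the subspace
  topology) into GL_m(C); GL_m(C) carries the topology of entrywise convergence.\<close>

definition cont_rep ::
  "('a, 'b) monoid_scheme \<Rightarrow> 'a topology \<Rightarrow> 'a set \<Rightarrow> nat \<Rightarrow> ('a \<Rightarrow> complex mat) \<Rightarrow> bool" where
  "cont_rep G T H m \<Theta> \<longleftrightarrow>
     (\<forall>h \<in> H. \<Theta> h \<in> carrier_mat m m \<and> invertible_mat (\<Theta> h)) \<and>
     (\<forall>h1 \<in> H. \<forall>h2 \<in> H. \<Theta> (h1 \<otimes>\<^bsub>G\<^esub> h2) = \<Theta> h1 * \<Theta> h2) \<and>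
     (\<forall>i < m. \<forall>j < m. continuous_map (subtopology T H) euclidean (\<lambda>h. \<Theta> h $$ (i, j)))"

definition invariant_subspace :: "'a set \<Rightarrow> nat \<Rightarrow> ('a \<Rightarrow> complex mat) \<Rightarrow> complex vec set \<Rightarrow> bool" where
  "invariant_subspace H m \<Theta> W \<longleftrightarrow>
     W \<subseteq> carrier_vec m \<and> 0\<^sub>v m \<in> W \<and>
     (\<forall>v \<in> W. \<forall>w \<in> W. v + w \<in> W) \<and>
     (\<forall>c. \<forall>v \<in> W. c \<cdot>\<^sub>v v \<in> W) \<and>
     (\<forall>h \<in> H. \<forall>v \<in> W. \<Theta> h *\<^sub>v v \<in> W)"

definition irreducible_rep :: "'a set \<Rightarrow> nat \<Rightarrow> ('a \<Rightarrow> complex mat) \<Rightarrow> bool" where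
  "irreducible_rep H m \<Theta> \<longleftrightarrow>
     0 < m \<and> (\<forall>W. invariant_subspace H m \<Theta> W \<longrightarrow> W = {0\<^sub>v m} \<or> W = carrier_vec m)"

definition affords :: "'a set \<Rightarrow> ('a \<Rightarrow> complex mat) \<Rightarrow> ('a \<Rightarrow> complex) \<Rightarrow> bool" where
  "affords H \<Theta> chi \<longleftrightarrow> (\<forall>h \<in> H. chi h = mat_trace (\<Theta> h))"

definition Irr :: "('a, 'b) monoid_scheme \<Rightarrow> 'a topology \<Rightarrow> 'a set \<Rightarrow> ('a \<Rightarrow> complex) \<Rightarrow> bool" where
  "Irr G T H chi \<longleftrightarrow> (\<exists>m \<Theta>. cont_rep G T H m \<Theta> \<and> irreducible_rep H m \<Theta> \<and> affords H \<Theta> chi)"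

definition Lin :: "('a, 'b) monoid_scheme \<Rightarrow> 'a topology \<Rightarrow> ('a \<Rightarrow> complex) \<Rightarrow> bool" where
  "Lin G T \<psi> \<longleftrightarrow> (\<exists>\<Psi>. cont_rep G T (carrier G) 1 \<Psi> \<and> affords (carrier G) \<Psi> \<psi>)"

definition conjf :: "('a, 'b) monoid_scheme \<Rightarrow> 'a \<Rightarrow> ('a \<Rightarrow> 'c) \<Rightarrow> 'a \<Rightarrow> 'c" where
  "conjf G g f x = f (inv\<^bsub>G\<^esub> g \<otimes>\<^bsub>G\<^esub> x \<otimes>\<^bsub>G\<^esub> g)"

definition Stab :: "('a, 'b) monoid_scheme \<Rightarrow> 'a set \<Rightarrow> ('a \<Rightarrow> complex) \<Rightarrow> 'a set" where
  "Stab G N \<theta> = {g \<in> carrier G. \<forall>n \<in> N. conjf G g \<theta> n = \<theta> n}"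

text \<open>Stab_G of the twist class of theta: g with ^g theta = theta psi|_N, psi in Lin(G).\<close>

definition Stab_twist :: "('a, 'b) monoid_scheme \<Rightarrow> 'a topology \<Rightarrow> 'a set \<Rightarrow> ('a \<Rightarrow> complex) \<Rightarrow> 'a set" where
  "Stab_twist G T N \<theta> =
     {g \<in> carrier G. \<exists>\<psi>. Lin G T \<psi> \<and> (\<forall>n \<in> N. conjf G g \<theta> n = \<theta> n * \<psi> n)}"

definition proj_rep ::
  "('a, 'b) monoid_scheme \<Rightarrow> 'a set \<Rightarrow> nat \<Rightarrow> ('a \<Rightarrow> complex mat) \<Rightarrow> ('a \<Rightarrow> 'a \<Rightarrow> complex) \<Rightarrow> bool" where
  "proj_rep G K m Prj \<alpha> \<longleftrightarrow>
     (\<forall>x \<in> K. Prj x \<in> carrier_mat m m \<and> invertible_mat (Prj x)) \<and>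
     (\<forall>x \<in> K. \<forall>y \<in> K. \<alpha> x y \<noteq> 0) \<and>
     (\<forall>x \<in> K. \<forall>y \<in> K. \<forall>z \<in> K.
        \<alpha> x y * \<alpha> (x \<otimes>\<^bsub>G\<^esub> y) z = \<alpha> y z * \<alpha> x (y \<otimes>\<^bsub>G\<^esub> z)) \<and>
     (\<forall>x \<in> K. \<forall>y \<in> K. Prj x * Prj y = \<alpha> x y \<cdot>\<^sub>m Prj (x \<otimes>\<^bsub>G\<^esub> y))"

definition strong_ext_rep ::
  "('a, 'b) monoid_scheme \<Rightarrow> 'a set \<Rightarrow> 'a set \<Rightarrow> nat \<Rightarrow> ('a \<Rightarrow> complex mat) \<Rightarrow> ('a \<Rightarrow> complex mat) \<Rightarrow> bool" where
  "strong_ext_rep G N K m \<Theta> Prj \<longleftrightarrow>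
     (\<exists>\<alpha>. proj_rep G K m Prj \<alpha>) \<and>
     (\<forall>x \<in> K. \<forall>n \<in> N. Prj (x \<otimes>\<^bsub>G\<^esub> n) = Prj x * \<Theta> n \<and> Prj (n \<otimes>\<^bsub>G\<^esub> x) = \<Theta> n * Prj x)"

definition strong_ext ::
  "('a, 'b) monoid_scheme \<Rightarrow> 'a topology \<Rightarrow> 'a set \<Rightarrow> 'a set \<Rightarrow> ('a \<Rightarrow> complex) \<Rightarrow> ('a \<Rightarrow> complex) \<Rightarrow> bool" where
  "strong_ext G T N K \<theta> \<theta>h \<longleftrightarrow>
     (\<exists>m \<Theta> Prj. cont_rep G T N m \<Theta> \<and> affords N \<Theta> \<theta> \<and>
        strong_ext_rep G N K m \<Theta> Prj \<and> (\<forall>x \<in> K. \<theta>h x = mat_trace (Prj x)))"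

end

theory Submission
  imports Defs "Jordan_Normal_Form.Spectral_Radius"
begin

lemma mv_index:
  fixes A :: "'x::comm_ring_1 mat"
  assumes "A \<in> carrier_mat n n" "v \<in> carrier_vec n" "i < n"
  shows "(A *\<^sub>v v) $ i = (\<Sum>k<n. A $$ (i, k) * v $ k)"
  using assms by (auto simp: mult_mat_vec_def scalar_prod_def atLeast0LessThan)

lemma mv_unit:
  fixes A :: "'x::comm_ring_1 mat"
  assumes "A \<in> carrier_mat n n" "j < n"
  shows "A *\<^sub>v unit_vec n j = col A j"
proof (rule eq_vecI)
  fix i assume "i < dim_vec (col A j)"
  hence i: "i < n" using assms by auto
  have "(A *\<^sub>v unit_vec n j) $ i = (\<Sum>k<n. A $$ (i, k) * unit_vec n j $ k)"
    using mv_index[OF assms(1) _ i] by auto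
  also have "\<dots> = (\<Sum>k<n. if k = j then A $$ (i, k) else 0)"
    by (rule sum.cong, use assms in auto)
  also have "\<dots> = A $$ (i, j)" using assms by simp
  finally show "(A *\<^sub>v unit_vec n j) $ i = col A j $ i" using i assms by auto
qed (use assms in auto)

definition irr_alg :: "nat \<Rightarrow> complex mat set \<Rightarrow> bool" where
  "irr_alg m A \<longleftrightarrow> 0 < m \<and> A \<subseteq> carrier_mat m m \<and> 1\<^sub>m m \<in> A \<and> 0\<^sub>m m m \<in> A \<and>
    (\<forall>a\<in>A. \<forall>b\<in>A. a + b \<in> A \<and> a * b \<in> A) \<and> (\<forall>c. \<forall>a\<in>A. c \<cdot>\<^sub>m a \<in> A) \<and>
    (\<forall>W. W \<subseteq> carrier_vec m \<and> 0\<^sub>v m \<in> W \<and> (\<forall>v\<in>W. \<forall>w\<in>W. v + w \<in> W) \<and>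
       (\<forall>c. \<forall>v\<in>W. c \<cdot>\<^sub>v v \<in> W) \<and> (\<forall>a\<in>A. \<forall>v\<in>W. a *\<^sub>v v \<in> W) \<longrightarrow>
       W = {0\<^sub>v m} \<or> W = carrier_vec m)"

lemma schur:
  assumes irr: "irr_alg m A" and M: "M \<in> carrier_mat m m" and comm: "\<forall>b\<in>A. M * b = b * M"
  shows "\<exists>c. M = c \<cdot>\<^sub>m 1\<^sub>m m"
proof -
  have m: "0 < m" and Ac: "A \<subseteq> carrier_mat m m" using irr unfolding irr_alg_def by auto
  from spectrum_non_empty[OF M m] obtain l where "l \<in> spectrum M" by auto
  then obtain v where ev: "eigenvector M v l"
    unfolding spectrum_def eigenvalue_def by auto
  hence v: "v \<in> carrier_vec m" "v \<noteq> 0\<^sub>v m" "M *\<^sub>v v = l \<cdot>\<^sub>v v"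
    using M unfolding eigenvector_def by auto
  define W where "W = {w \<in> carrier_vec m. M *\<^sub>v w = l \<cdot>\<^sub>v w}"
  have "W \<subseteq> carrier_vec m" unfolding W_def by auto
  moreover have "0\<^sub>v m \<in> W" unfolding W_def using M by auto
  moreover have "\<forall>x\<in>W. \<forall>w\<in>W. x + w \<in> W" unfolding W_def using M
    by (auto simp: mult_add_distrib_mat_vec smult_add_distrib_vec)
  moreover have "\<forall>c. \<forall>x\<in>W. c \<cdot>\<^sub>v x \<in> W" unfolding W_def using M
    by (auto simp: mult_mat_vec smult_smult_assoc mult.commute)
  moreover have "\<forall>a\<in>A. \<forall>x\<in>W. a *\<^sub>v x \<in> W"
  proof (intro ballI)
    fix a x assume a: "a \<in> A" and x: "x \<in> W"
    have ac: "a \<in> carrier_mat m m" using a Ac by auto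
    have xc: "x \<in> carrier_vec m" "M *\<^sub>v x = l \<cdot>\<^sub>v x" using x unfolding W_def by auto
    have "M *\<^sub>v (a *\<^sub>v x) = (M * a) *\<^sub>v x" using M ac xc by simp
    also have "\<dots> = (a * M) *\<^sub>v x" using comm a by simp
    also have "\<dots> = a *\<^sub>v (l \<cdot>\<^sub>v x)" using M ac xc by simp
    also have "\<dots> = l \<cdot>\<^sub>v (a *\<^sub>v x)" using ac xc by (simp add: mult_mat_vec)
    finally show "a *\<^sub>v x \<in> W" unfolding W_def using ac xc by auto
  qed
  ultimately have "W = {0\<^sub>v m} \<or> W = carrier_vec m" using irr unfolding irr_alg_def by blast
  moreover have "v \<in> W" using v unfolding W_def by auto
  ultimately have WW: "W = carrier_vec m" using v by auto
  have "M = l \<cdot>\<^sub>m 1\<^sub>m m"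
  proof (rule eq_matI)
    fix i j assume i: "i < dim_row (l \<cdot>\<^sub>m 1\<^sub>m m)" and j: "j < dim_col (l \<cdot>\<^sub>m 1\<^sub>m m)"
    hence ij: "i < m" "j < m" by auto
    have "unit_vec m j \<in> W" using WW by auto
    hence "M *\<^sub>v unit_vec m j = l \<cdot>\<^sub>v unit_vec m j" unfolding W_def by auto
    hence "col M j $ i = (l \<cdot>\<^sub>v unit_vec m j) $ i" using mv_unit[OF M ij(2)] by simp
    thus "M $$ (i, j) = (l \<cdot>\<^sub>m 1\<^sub>m m) $$ (i, j)" using ij M by auto
  qed (use M in auto)
  thus ?thesis by blast
qed


fun msum :: "nat \<Rightarrow> nat \<Rightarrow> (nat \<Rightarrow> complex mat) \<Rightarrow> complex mat" where
  "msum m 0 f = 0\<^sub>m m m"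
| "msum m (Suc n) f = f n + msum m n f"

lemma msum_carrier: "(\<And>i. i < n \<Longrightarrow> f i \<in> carrier_mat m m) \<Longrightarrow> msum m n f \<in> carrier_mat m m"
  by (induction n) auto

lemma msum_in: "irr_alg m A \<Longrightarrow> (\<And>i. i < n \<Longrightarrow> f i \<in> A) \<Longrightarrow> msum m n f \<in> A"
  by (induction n) (auto simp: irr_alg_def)

lemma add_mv_index: assumes "X \<in> carrier_mat m m" "Y \<in> carrier_mat m m" "v \<in> carrier_vec m" "p < m"
  shows "((X + Y) *\<^sub>v v) $ p = (X *\<^sub>v v) $ p + (Y *\<^sub>v v) $ p"
  using assms by (simp add: mv_index sum.distrib algebra_simps)

lemma smult_mv_index: fixes X :: "complex mat"
  assumes "X \<in> carrier_mat m m" "v \<in> carrier_vec m" "p < m"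
  shows "((c \<cdot>\<^sub>m X) *\<^sub>v v) $ p = c * (X *\<^sub>v v) $ p"
proof -
  have "((c \<cdot>\<^sub>m X) *\<^sub>v v) $ p = (\<Sum>k<m. (c \<cdot>\<^sub>m X) $$ (p,k) * v $ k)"
    by (rule mv_index) (use assms in auto)
  also have "\<dots> = c * (\<Sum>k<m. X $$ (p,k) * v $ k)" using assms by (simp add: sum_distrib_left mult.assoc)
  also have "\<dots> = c * (X *\<^sub>v v) $ p" using mv_index[OF assms] by simp
  finally show ?thesis .
qed

lemma smult_mv: fixes X :: "complex mat"
  assumes "X \<in> carrier_mat m m" "v \<in> carrier_vec m"
  shows "(c \<cdot>\<^sub>m X) *\<^sub>v v = c \<cdot>\<^sub>v (X *\<^sub>v v)"
  by (rule eq_vecI, use assms smult_mv_index in auto)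

lemma msum_mv: assumes "\<And>i. i < n \<Longrightarrow> f i \<in> carrier_mat m m" "v \<in> carrier_vec m" "p < m"
  shows "(msum m n f *\<^sub>v v) $ p = (\<Sum>i<n. (f i *\<^sub>v v) $ p)"
  using assms
proof (induction n)
  case 0 then show ?case by auto
next
  case (Suc n)
  have c: "msum m n f \<in> carrier_mat m m" "f n \<in> carrier_mat m m" using Suc.prems by (auto intro: msum_carrier)
  have "(msum m (Suc n) f *\<^sub>v v) $ p = (f n *\<^sub>v v) $ p + (msum m n f *\<^sub>v v) $ p"
    using add_mv_index[OF c(2) c(1)] Suc.prems by simp
  then show ?case using Suc by simp
qed

lemma prod_index_mv: fixes X Y :: "complex mat" assumes "X \<in> carrier_mat m m" "Y \<in> carrier_mat m m" "p < m" "j < m"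
  shows "(X * Y) $$ (p, j) = (X *\<^sub>v (Y *\<^sub>v unit_vec m j)) $ p"
  by (subst mv_unit[OF assms(2,4)]) (use assms in \<open>simp add: mult_mat_vec_def\<close>)

lemma density:
  assumes irr: "irr_alg m A"
  shows "k \<le> m \<Longrightarrow> \<forall>w. (\<forall>i<k. w i \<in> carrier_vec m) \<longrightarrow> (\<exists>a\<in>A. \<forall>i<k. a *\<^sub>v unit_vec m i = w i)"
proof (induction k)
  case 0
  then show ?case using irr unfolding irr_alg_def by auto
next
  case (Suc k)
  have km: "k < m" using Suc.prems by auto
  have IH: "\<And>w. (\<forall>i<k. w i \<in> carrier_vec m) \<Longrightarrow> (\<exists>a\<in>A. \<forall>i<k. a *\<^sub>v unit_vec m i = w i)"
    using Suc by auto
  have m: "0 < m" and Ac: "A \<subseteq> carrier_mat m m" and one: "1\<^sub>m m \<in> A" and zero: "0\<^sub>m m m \<in> A"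
    and addA: "\<And>a b. a \<in> A \<Longrightarrow> b \<in> A \<Longrightarrow> a + b \<in> A"
    and mulA: "\<And>a b. a \<in> A \<Longrightarrow> b \<in> A \<Longrightarrow> a * b \<in> A"
    and smA: "\<And>c a. a \<in> A \<Longrightarrow> c \<cdot>\<^sub>m a \<in> A"
    using irr unfolding irr_alg_def by auto
  define e where "e = (unit_vec m :: nat \<Rightarrow> complex vec)"
  have ec[simp]: "\<And>i. e i \<in> carrier_vec m" unfolding e_def by auto
  have claim: "\<exists>s\<in>A. (\<forall>i<k. s *\<^sub>v e i = 0\<^sub>v m) \<and> s *\<^sub>v e k \<noteq> 0\<^sub>v m"
  proof (rule ccontr)
    assume "\<not> ?thesis"
    hence H: "\<And>a. a \<in> A \<Longrightarrow> (\<forall>i<k. a *\<^sub>v e i = 0\<^sub>v m) \<Longrightarrow> a *\<^sub>v e k = 0\<^sub>v m" by blast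
    define P where "P = (\<lambda>i j a. a \<in> A \<and> (\<forall>l<k. a *\<^sub>v e l = (if l = i then e j else 0\<^sub>v m)))"
    define aa where "aa = (\<lambda>i j. SOME a. P i j a)"
    have aa: "P i j (aa i j)" if "i < k" "j < m" for i j
    proof -
      have "\<forall>l<k. (if l = i then e j else 0\<^sub>v m) \<in> carrier_vec m" by auto
      then obtain a where "a \<in> A" "\<forall>l<k. a *\<^sub>v unit_vec m l = (if l = i then e j else 0\<^sub>v m)"
        using IH[of "\<lambda>l. if l = i then e j else 0\<^sub>v m"] by blast
      hence "\<exists>a. P i j a" unfolding P_def e_def by blast
      thus ?thesis unfolding aa_def by (rule someI_ex)
    qed
    have aaA: "aa i j \<in> A" "aa i j \<in> carrier_mat m m" if "i < k" "j < m" for i j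
      using aa[OF that] Ac unfolding P_def by auto
    have aae: "aa i j *\<^sub>v e l = (if l = i then e j else 0\<^sub>v m)" if "i < k" "j < m" "l < k" for i j l
      using aa[OF that(1,2)] that(3) unfolding P_def by auto
    define M where "M = (\<lambda>i. mat m m (\<lambda>(p, j). (aa i j *\<^sub>v e k) $ p))"
    have Mc: "M i \<in> carrier_mat m m" for i unfolding M_def by auto
    have Mv: "(M i *\<^sub>v v) $ p = (\<Sum>j<m. (aa i j *\<^sub>v e k) $ p * v $ j)" if "v \<in> carrier_vec m" "p < m" for i v p
      using mv_index[OF Mc that(1) that(2)] that unfolding M_def by auto
    have F1: "(a *\<^sub>v e k) $ p = (\<Sum>i<k. (M i *\<^sub>v (a *\<^sub>v e i)) $ p)" if a: "a \<in> A" and p: "p < m" for a p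
    proof -
      have ac: "a \<in> carrier_mat m m" using a Ac by auto
      define a' where "a' = msum m k (\<lambda>i. msum m m (\<lambda>j. ((a *\<^sub>v e i) $ j) \<cdot>\<^sub>m aa i j))"
      have inner_c: "msum m m (\<lambda>j. ((a *\<^sub>v e i) $ j) \<cdot>\<^sub>m aa i j) \<in> carrier_mat m m" if "i < k" for i
        by (rule msum_carrier, use aaA that in auto)
      have a'A: "a' \<in> A" unfolding a'_def
        by (rule msum_in[OF irr], rule msum_in[OF irr], use aaA smA in auto)
      have a'c: "a' \<in> carrier_mat m m" using a'A Ac by auto
      have a'v: "(a' *\<^sub>v v) $ q = (\<Sum>i<k. \<Sum>j<m. (a *\<^sub>v e i) $ j * (aa i j *\<^sub>v v) $ q)"
        if v: "v \<in> carrier_vec m" and q: "q < m" for v q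
      proof -
        have "(a' *\<^sub>v v) $ q = (\<Sum>i<k. (msum m m (\<lambda>j. ((a *\<^sub>v e i) $ j) \<cdot>\<^sub>m aa i j) *\<^sub>v v) $ q)"
          unfolding a'_def by (rule msum_mv, use inner_c v q in auto)
        also have "\<dots> = (\<Sum>i<k. \<Sum>j<m. (a *\<^sub>v e i) $ j * (aa i j *\<^sub>v v) $ q)"
        proof (rule sum.cong[OF refl])
          fix i assume i: "i \<in> {..<k}"
          have "(msum m m (\<lambda>j. ((a *\<^sub>v e i) $ j) \<cdot>\<^sub>m aa i j) *\<^sub>v v) $ q
              = (\<Sum>j<m. (((a *\<^sub>v e i) $ j \<cdot>\<^sub>m aa i j) *\<^sub>v v) $ q)"
            by (rule msum_mv, use aaA i v q in auto)
          also have "\<dots> = (\<Sum>j<m. (a *\<^sub>v e i) $ j * (aa i j *\<^sub>v v) $ q)"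
            by (rule sum.cong[OF refl], rule smult_mv_index, use aaA i v q in auto)
          finally show "(msum m m (\<lambda>j. ((a *\<^sub>v e i) $ j) \<cdot>\<^sub>m aa i j) *\<^sub>v v) $ q
              = (\<Sum>j<m. (a *\<^sub>v e i) $ j * (aa i j *\<^sub>v v) $ q)" .
        qed
        finally show ?thesis .
      qed
      have same: "(a' *\<^sub>v e l) $ q = (a *\<^sub>v e l) $ q" if l: "l < k" and q: "q < m" for l q
      proof -
        have "(a' *\<^sub>v e l) $ q = (\<Sum>i<k. \<Sum>j<m. (a *\<^sub>v e i) $ j * (aa i j *\<^sub>v e l) $ q)"
          using a'v q by auto
        also have "\<dots> = (\<Sum>i<k. if i = l then (\<Sum>j<m. (a *\<^sub>v e l) $ j * e j $ q) else 0)"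
          by (rule sum.cong[OF refl], use aae l q in auto)
        also have "\<dots> = (\<Sum>j<m. (a *\<^sub>v e l) $ j * e j $ q)" using l by simp
        also have "\<dots> = (\<Sum>j<m. if j = q then (a *\<^sub>v e l) $ q else 0)"
          by (rule sum.cong[OF refl], use q in \<open>auto simp: e_def\<close>)
        also have "\<dots> = (a *\<^sub>v e l) $ q" using q by simp
        finally show ?thesis .
      qed
      define d where "d = a + (-1) \<cdot>\<^sub>m a'"
      have dA: "d \<in> A" unfolding d_def using addA smA a a'A by auto
      have dv: "(d *\<^sub>v v) $ q = (a *\<^sub>v v) $ q - (a' *\<^sub>v v) $ q" if "v \<in> carrier_vec m" "q < m" for v q
        unfolding d_def using that ac a'c by (simp add: add_mult_distrib_mat_vec mult_mat_vec)
      have "\<forall>i<k. d *\<^sub>v e i = 0\<^sub>v m"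
      proof (intro allI impI eq_vecI)
        fix i q assume i: "i < k" and q: "q < dim_vec (0\<^sub>v m :: complex vec)"
        then show "(d *\<^sub>v e i) $ q = 0\<^sub>v m $ q" using dv[of "e i" q] same[of i q] by auto
      qed (use dA Ac in auto)
      hence "d *\<^sub>v e k = 0\<^sub>v m" using H dA by auto
      hence "(a *\<^sub>v e k) $ p = (a' *\<^sub>v e k) $ p" using dv[of "e k" p] p by auto
      also have "\<dots> = (\<Sum>i<k. \<Sum>j<m. (a *\<^sub>v e i) $ j * (aa i j *\<^sub>v e k) $ p)" using a'v p by auto
      also have "\<dots> = (\<Sum>i<k. (M i *\<^sub>v (a *\<^sub>v e i)) $ p)"
        by (rule sum.cong[OF refl], subst Mv, use ac p in \<open>auto simp: mult.commute\<close>)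
      finally show ?thesis .
    qed
    have comm: "\<forall>b\<in>A. M i * b = b * M i" if i: "i < k" for i
    proof
      fix b assume b: "b \<in> A"
      have bc: "b \<in> carrier_mat m m" using b Ac by auto
      show "M i * b = b * M i"
      proof (rule eq_matI)
        fix p j assume p: "p < dim_row (b * M i)" and j: "j < dim_col (b * M i)"
        hence pj: "p < m" "j < m" using bc Mc[of i] by auto
        have "(b * M i) $$ (p, j) = (b *\<^sub>v (M i *\<^sub>v e j)) $ p"
          using prod_index_mv[OF bc Mc pj] unfolding e_def .
        also have "M i *\<^sub>v e j = aa i j *\<^sub>v e k"
          using mv_unit[OF Mc pj(2)] pj aaA[OF i pj(2)] unfolding M_def e_def
          by (auto intro!: eq_vecI)
        also have "(b *\<^sub>v (aa i j *\<^sub>v e k)) $ p = ((b * aa i j) *\<^sub>v e k) $ p"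
          using bc aaA[OF i pj(2)] by simp
        also have "\<dots> = (\<Sum>l<k. (M l *\<^sub>v ((b * aa i j) *\<^sub>v e l)) $ p)"
          by (rule F1, use mulA b aaA i pj in auto)
        also have "\<dots> = (\<Sum>l<k. if l = i then (M i *\<^sub>v (b *\<^sub>v e j)) $ p else 0)"
        proof (rule sum.cong[OF refl])
          fix l assume l: "l \<in> {..<k}"
          have "(b * aa i j) *\<^sub>v e l = b *\<^sub>v (aa i j *\<^sub>v e l)" using bc aaA[OF i pj(2)] by simp
          also have "\<dots> = (if l = i then b *\<^sub>v e j else 0\<^sub>v m)" using aae[OF i pj(2)] l bc by auto
          finally show "(M l *\<^sub>v ((b * aa i j) *\<^sub>v e l)) $ p = (if l = i then (M i *\<^sub>v (b *\<^sub>v e j)) $ p else 0)"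
            using Mc[of l] pj by (auto simp: mv_index[OF Mc[of l]])
        qed
        also have "\<dots> = (M i *\<^sub>v (b *\<^sub>v e j)) $ p" using i by simp
        also have "\<dots> = (M i * b) $$ (p, j)" using prod_index_mv[OF Mc bc pj] unfolding e_def by simp
        finally show "(M i * b) $$ (p, j) = (b * M i) $$ (p, j)" by simp
      qed (use bc Mc[of i] in auto)
    qed
    have "\<forall>i. \<exists>c. i < k \<longrightarrow> M i = c \<cdot>\<^sub>m 1\<^sub>m m"
      using schur[OF irr Mc comm] by blast
    then obtain c where c: "\<And>i. i < k \<Longrightarrow> M i = c i \<cdot>\<^sub>m 1\<^sub>m m" by metis
    have "(1\<^sub>m m *\<^sub>v e k) $ k = (\<Sum>i<k. (M i *\<^sub>v (1\<^sub>m m *\<^sub>v e i)) $ k)"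
      by (rule F1[OF one km])
    also have "\<dots> = (\<Sum>i<k. 0)"
    proof (rule sum.cong[OF refl])
      fix i assume i: "i \<in> {..<k}"
      have "M i *\<^sub>v (1\<^sub>m m *\<^sub>v e i) = c i \<cdot>\<^sub>v e i" using c[of i] i smult_mv[of "1\<^sub>m m" m "e i" "c i"] by simp
      thus "(M i *\<^sub>v (1\<^sub>m m *\<^sub>v e i)) $ k = 0" using i km by (auto simp: e_def)
    qed
    finally show False using km by (simp add: e_def)
  qed
  define W where "W = {s *\<^sub>v e k | s. s \<in> A \<and> (\<forall>i<k. s *\<^sub>v e i = 0\<^sub>v m)}"
  have "W \<subseteq> carrier_vec m" unfolding W_def using Ac by auto
  moreover have "0\<^sub>v m \<in> W" unfolding W_def using zero
    by (auto intro!: exI[of _ "0\<^sub>m m m"])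
  moreover have "\<forall>v\<in>W. \<forall>w\<in>W. v + w \<in> W"
  proof (intro ballI)
    fix v w assume "v \<in> W" "w \<in> W"
    then obtain s t where s: "v = s *\<^sub>v e k" "s \<in> A" "\<forall>i<k. s *\<^sub>v e i = 0\<^sub>v m"
      and t: "w = t *\<^sub>v e k" "t \<in> A" "\<forall>i<k. t *\<^sub>v e i = 0\<^sub>v m" unfolding W_def by auto
    have sc: "s \<in> carrier_mat m m" "t \<in> carrier_mat m m" using s t Ac by auto
    show "v + w \<in> W" unfolding W_def
      by (rule CollectI, rule exI[of _ "s + t"], use s t sc addA in \<open>auto simp: add_mult_distrib_mat_vec\<close>)
  qed
  moreover have "\<forall>c. \<forall>v\<in>W. c \<cdot>\<^sub>v v \<in> W"
  proof (intro allI ballI)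
    fix c v assume "v \<in> W"
    then obtain s where s: "v = s *\<^sub>v e k" "s \<in> A" "\<forall>i<k. s *\<^sub>v e i = 0\<^sub>v m" unfolding W_def by auto
    have sc: "s \<in> carrier_mat m m" using s Ac by auto
    show "c \<cdot>\<^sub>v v \<in> W" unfolding W_def
      by (rule CollectI, rule exI[of _ "c \<cdot>\<^sub>m s"], use s sc smA in \<open>auto simp: smult_mv\<close>)
  qed
  moreover have "\<forall>a\<in>A. \<forall>v\<in>W. a *\<^sub>v v \<in> W"
  proof (intro ballI)
    fix a v assume a: "a \<in> A" and "v \<in> W"
    then obtain s where s: "v = s *\<^sub>v e k" "s \<in> A" "\<forall>i<k. s *\<^sub>v e i = 0\<^sub>v m" unfolding W_def by auto
    have sc: "s \<in> carrier_mat m m" "a \<in> carrier_mat m m" using s a Ac by auto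
    show "a *\<^sub>v v \<in> W" unfolding W_def
      by (rule CollectI, rule exI[of _ "a * s"], use s sc mulA a in auto)
  qed
  ultimately have "W = {0\<^sub>v m} \<or> W = carrier_vec m" using irr unfolding irr_alg_def by blast
  moreover obtain s0 where s0: "s0 \<in> A" "\<forall>i<k. s0 *\<^sub>v e i = 0\<^sub>v m" "s0 *\<^sub>v e k \<noteq> 0\<^sub>v m"
    using claim by blast
  ultimately have WW: "W = carrier_vec m" unfolding W_def by blast
  show ?case
  proof (intro allI impI)
    fix w :: "nat \<Rightarrow> complex vec" assume w: "\<forall>i<Suc k. w i \<in> carrier_vec m"
    obtain a0 where a0: "a0 \<in> A" "\<forall>i<k. a0 *\<^sub>v e i = w i" using IH[of w] w unfolding e_def by auto
    have a0c: "a0 \<in> carrier_mat m m" using a0 Ac by auto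
    have "w k + (-1) \<cdot>\<^sub>v (a0 *\<^sub>v e k) \<in> W" unfolding WW using w a0c by auto
    then obtain s where s: "w k + (-1) \<cdot>\<^sub>v (a0 *\<^sub>v e k) = s *\<^sub>v e k" "s \<in> A" "\<forall>i<k. s *\<^sub>v e i = 0\<^sub>v m"
      unfolding W_def by auto
    have sc: "s \<in> carrier_mat m m" using s Ac by auto
    have "\<forall>i<Suc k. (a0 + s) *\<^sub>v e i = w i"
    proof (intro allI impI)
      fix i assume i: "i < Suc k"
      have eq: "(a0 + s) *\<^sub>v e i = a0 *\<^sub>v e i + s *\<^sub>v e i" using a0c sc by (simp add: add_mult_distrib_mat_vec)
      show "(a0 + s) *\<^sub>v e i = w i"
      proof (cases "i < k")
        case True
        then show ?thesis unfolding eq using a0 s w by auto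
      next
        case False
        hence ik: "i = k" using i by auto
        have "a0 *\<^sub>v e k + s *\<^sub>v e k = w k"
        proof (rule eq_vecI)
          fix q assume q: "q < dim_vec (w k)"
          have qm: "q < m" using q w by auto
          have "(w k + (-1) \<cdot>\<^sub>v (a0 *\<^sub>v e k)) $ q = (s *\<^sub>v e k) $ q" using s by simp
          hence "w k $ q - (a0 *\<^sub>v e k) $ q = (s *\<^sub>v e k) $ q" using qm w a0c by simp
          thus "(a0 *\<^sub>v e k + s *\<^sub>v e k) $ q = w k $ q" using qm a0c sc by (simp add: algebra_simps)
        qed (use w a0c sc in auto)
        thus ?thesis using eq ik by simp
      qed
    qed
    thus "\<exists>a\<in>A. \<forall>i<Suc k. a *\<^sub>v unit_vec m i = w i" using addA a0 s unfolding e_def by blast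
  qed
qed

lemma burnside:
  assumes irr: "irr_alg m A" and E: "E \<in> carrier_mat m m"
  shows "E \<in> A"
proof -
  have Ac: "A \<subseteq> carrier_mat m m" using irr unfolding irr_alg_def by auto
  have "\<forall>i<m. col E i \<in> carrier_vec m" using E by auto
  then obtain a where a: "a \<in> A" "\<forall>i<m. a *\<^sub>v unit_vec m i = col E i"
    using density[OF irr order_refl] by blast
  have ac: "a \<in> carrier_mat m m" using a Ac by auto
  have "a = E"
  proof (rule mat_col_eqI)
    fix i assume "i < dim_col E"
    thus "col a i = col E i" using a(2) mv_unit[OF ac, of i] E by auto
  qed (use ac E in auto)
  thus ?thesis using a by simp
qed


lemma pm_div: "q < (m::nat) \<Longrightarrow> (p*m+q) div m = p"
  by simp

lemma pm_mod: "q < (m::nat) \<Longrightarrow> (p*m+q) mod m = q"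
  by simp

lemma sum_divmod:
  fixes f :: "nat \<Rightarrow> nat \<Rightarrow> complex"
  shows "(\<Sum>a<m*m. f (a div m) (a mod m)) = (\<Sum>p<m. \<Sum>q<m. f p q)"
proof -
  have bij: "bij_betw (\<lambda>(p,q). p*m+q) ({..<m}\<times>{..<m}) {..<m*m}"
  proof (rule bij_betw_imageI)
    show "inj_on (\<lambda>(p,q). p*m+q) ({..<m}\<times>{..<m})"
    proof (rule inj_onI, clarify)
      fix p q p' q' assume "p < m" "q < m" "p' < m" "q' < m" "p*m+q = p'*m+q'"
      thus "p = p' \<and> q = q'" using pm_div pm_mod by metis
    qed
    show "(\<lambda>(p,q). p*m+q) ` ({..<m}\<times>{..<m}) = {..<m*m}"
    proof
      show "(\<lambda>(p,q). p*m+q) ` ({..<m}\<times>{..<m}) \<subseteq> {..<m*m}"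
      proof clarify
        fix p q assume "p < m" "q < m"
        hence "p*m+q < p*m + m" by simp
        also have "\<dots> = (p+1)*m" by simp
        also have "\<dots> \<le> m*m" using mult_le_mono1[of "p+1" m m] \<open>p < m\<close> by simp
        finally show "p*m+q < m*m" .
      qed
      show "{..<m*m} \<subseteq> (\<lambda>(p,q). p*m+q) ` ({..<m}\<times>{..<m})"
      proof
        fix a assume a: "a \<in> {..<m*m}"
        hence m: "0 < m" by (cases m) auto
        have "a div m < m" using a by (simp add: div_less_iff_less_mult m)
        moreover have "a mod m < m" using m by simp
        moreover have "a = (a div m)*m + a mod m" by simp
        ultimately show "a \<in> (\<lambda>(p,q). p*m+q) ` ({..<m}\<times>{..<m})"
          by (intro image_eqI[of _ _ "(a div m, a mod m)"]) auto
      qed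
    qed
  qed
  have "(\<Sum>a<m*m. f (a div m) (a mod m)) = (\<Sum>x\<in>{..<m}\<times>{..<m}. f (((\<lambda>(p,q). p*m+q) x) div m) (((\<lambda>(p,q). p*m+q) x) mod m))"
    using sum.reindex_bij_betw[OF bij, of "\<lambda>a. f (a div m) (a mod m)"] by simp
  also have "\<dots> = (\<Sum>x\<in>{..<m}\<times>{..<m}. f (fst x) (snd x))"
    by (rule sum.cong[OF refl], auto)
  also have "\<dots> = (\<Sum>p<m. \<Sum>q<m. f p q)"
    by (simp add: sum.cartesian_product split_def)
  finally show ?thesis .
qed

lemma trace_prod:
  fixes X Y :: "complex mat"
  assumes "X \<in> carrier_mat m m" "Y \<in> carrier_mat m m"
  shows "mat_trace (X * Y) = (\<Sum>p<m. \<Sum>q<m. X $$ (p, q) * Y $$ (q, p))"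
  using assms by (simp add: mat_trace_def scalar_prod_def atLeast0LessThan)

lemma trace_comm:
  fixes X Y :: "complex mat"
  assumes "X \<in> carrier_mat m m" "Y \<in> carrier_mat m m"
  shows "mat_trace (X * Y) = mat_trace (Y * X)"
  unfolding trace_prod[OF assms] trace_prod[OF assms(2,1)]
  by (subst sum.swap) (simp add: mult.commute)

lemma counting:
  fixes F :: "nat \<Rightarrow> nat \<Rightarrow> complex mat" and P :: "complex mat"
  assumes Fc: "\<And>i j. i < m \<Longrightarrow> j < m \<Longrightarrow> F i j \<in> carrier_mat m m"
    and dual: "\<And>i j k l. i < m \<Longrightarrow> j < m \<Longrightarrow> k < m \<Longrightarrow> l < m \<Longrightarrow>
        mat_trace (F i j * F k l) = (if j = k \<and> i = l then 1 else 0)"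
    and P: "P \<in> carrier_mat m m"
    and orth: "\<And>i j. i < m \<Longrightarrow> j < m \<Longrightarrow> mat_trace (P * F i j) = 0"
  shows "P = 0\<^sub>m m m"
proof -
  define n where "n = m * m"
  have dm: "b div m < m" "b mod m < m" if "b < n" for b
  proof -
    have m: "0 < m" using that unfolding n_def by (cases m) auto
    show "b div m < m" using that m unfolding n_def by (simp add: div_less_iff_less_mult)
    show "b mod m < m" using m by simp
  qed
  define Fb where "Fb = (\<lambda>b. F (b div m) (b mod m))"
  define Db where "Db = (\<lambda>b. F (b mod m) (b div m))"
  define Gm where "Gm = mat n n (\<lambda>(a, b). Fb b $$ (a div m, a mod m))"
  define Rm where "Rm = mat n n (\<lambda>(b, a). Db b $$ (a mod m, a div m))"
  have Fbc: "Fb b \<in> carrier_mat m m" "Db b \<in> carrier_mat m m" if "b < n" for b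
    unfolding Fb_def Db_def using Fc dm[OF that] by auto
  have Gc: "Gm \<in> carrier_mat n n" and Rc: "Rm \<in> carrier_mat n n" unfolding Gm_def Rm_def by auto
  have RG: "Rm * Gm = 1\<^sub>m n"
  proof (rule eq_matI)
    fix b c assume b: "b < dim_row (1\<^sub>m n :: complex mat)" and c: "c < dim_col (1\<^sub>m n :: complex mat)"
    hence bc: "b < n" "c < n" by auto
    have "(Rm * Gm) $$ (b, c) = (\<Sum>a<n. Rm $$ (b, a) * Gm $$ (a, c))"
      using bc Gc Rc by (simp add: scalar_prod_def atLeast0LessThan)
    also have "\<dots> = (\<Sum>a<m*m. Db b $$ (a mod m, a div m) * Fb c $$ (a div m, a mod m))"
      unfolding n_def by (rule sum.cong[OF refl], auto simp: Rm_def Gm_def n_def bc[unfolded n_def])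
    also have "\<dots> = (\<Sum>p<m. \<Sum>q<m. Db b $$ (q, p) * Fb c $$ (p, q))"
      by (rule sum_divmod)
    also have "\<dots> = mat_trace (Fb c * Db b)"
      unfolding trace_prod[OF Fbc(1)[OF bc(2)] Fbc(2)[OF bc(1)]]
      using sum.swap[of "\<lambda>p q. Db b $$ (q,p) * Fb c $$ (p,q)" "{..<m}" "{..<m}"] by (simp add: mult.commute)
    also have "\<dots> = mat_trace (Db b * Fb c)"
      by (rule trace_comm[OF Fbc(1)[OF bc(2)] Fbc(2)[OF bc(1)]])
    also have "\<dots> = (if b div m = c div m \<and> b mod m = c mod m then 1 else 0)"
      unfolding Fb_def Db_def using dual dm[OF bc(1)] dm[OF bc(2)] by auto
    also have "\<dots> = 1\<^sub>m n $$ (b, c)"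
    proof -
      have "(b div m = c div m \<and> b mod m = c mod m) = (b = c)" by (metis div_mult_mod_eq)
      thus ?thesis using bc by simp
    qed
    finally show "(Rm * Gm) $$ (b, c) = 1\<^sub>m n $$ (b, c)" .
  qed (use Gc Rc in auto)
  have GR: "Gm * Rm = 1\<^sub>m n" by (rule mat_mult_left_right_inverse[OF Rc Gc RG])
  define v where "v = vec n (\<lambda>a. P $$ (a mod m, a div m))"
  have vc: "v \<in> carrier_vec n" unfolding v_def by auto
  have Gv: "transpose_mat Gm *\<^sub>v v = 0\<^sub>v n"
  proof (rule eq_vecI)
    fix c assume "c < dim_vec (0\<^sub>v n :: complex vec)"
    hence c: "c < n" by auto
    have "(transpose_mat Gm *\<^sub>v v) $ c = (\<Sum>a<n. Gm $$ (a, c) * v $ a)"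
      using c Gc vc by (simp add: mult_mat_vec_def scalar_prod_def atLeast0LessThan)
    also have "\<dots> = (\<Sum>a<m*m. Fb c $$ (a div m, a mod m) * P $$ (a mod m, a div m))"
      unfolding n_def by (rule sum.cong[OF refl], auto simp: v_def Gm_def n_def c[unfolded n_def])
    also have "\<dots> = (\<Sum>p<m. \<Sum>q<m. Fb c $$ (p, q) * P $$ (q, p))"
      by (rule sum_divmod)
    also have "\<dots> = mat_trace (Fb c * P)"
      unfolding trace_prod[OF Fbc(1)[OF c] P] ..
    also have "\<dots> = mat_trace (P * Fb c)"
      by (rule trace_comm[OF Fbc(1)[OF c] P])
    also have "\<dots> = 0" unfolding Fb_def using orth dm[OF c] by auto
    finally show "(transpose_mat Gm *\<^sub>v v) $ c = 0\<^sub>v n $ c" using c by simp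
  qed (use Gc in auto)
  have "transpose_mat Rm * transpose_mat Gm = transpose_mat (Gm * Rm)"
    using Gc Rc by (simp add: transpose_mult)
  hence TT: "transpose_mat Rm * transpose_mat Gm = 1\<^sub>m n" using GR by simp
  have "v = (transpose_mat Rm * transpose_mat Gm) *\<^sub>v v" unfolding TT using vc by simp
  also have "\<dots> = transpose_mat Rm *\<^sub>v (transpose_mat Gm *\<^sub>v v)" using Gc Rc vc by simp
  also have "\<dots> = 0\<^sub>v n" unfolding Gv using Rc
    by (intro eq_vecI) (auto simp: mult_mat_vec_def scalar_prod_def)
  finally have v0: "v = 0\<^sub>v n" .
  show ?thesis
  proof (rule eq_matI)
    fix q p assume "q < dim_row (0\<^sub>m m m :: complex mat)" "p < dim_col (0\<^sub>m m m :: complex mat)"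
    hence qp: "q < m" "p < m" by auto
    have lt: "p * m + q < n"
    proof -
      have "p*m+q < p*m + m" using qp by simp
      also have "\<dots> = (p+1)*m" by simp
      also have "\<dots> \<le> m*m" using mult_le_mono1[of "p+1" m m] qp by simp
      finally show ?thesis unfolding n_def .
    qed
    have "v $ (p * m + q) = P $$ (q, p)" unfolding v_def using lt qp by simp
    thus "P $$ (q, p) = 0\<^sub>m m m $$ (q, p)" using v0 lt qp by simp
  qed (use P in auto)
qed


inductive_set jspan :: "nat \<Rightarrow> 'a set \<Rightarrow> ('a \<Rightarrow> complex mat) \<Rightarrow> ('a \<Rightarrow> complex mat) \<Rightarrow> (complex mat \<times> complex mat) set"
  for m N Th Th' where
  gen: "n \<in> N \<Longrightarrow> (Th n, Th' n) \<in> jspan m N Th Th'"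
| zero: "(0\<^sub>m m m, 0\<^sub>m m m) \<in> jspan m N Th Th'"
| add: "(X, Y) \<in> jspan m N Th Th' \<Longrightarrow> (X', Y') \<in> jspan m N Th Th' \<Longrightarrow> (X + X', Y + Y') \<in> jspan m N Th Th'"
| smult: "(X, Y) \<in> jspan m N Th Th' \<Longrightarrow> (c \<cdot>\<^sub>m X, c \<cdot>\<^sub>m Y) \<in> jspan m N Th Th'"

lemma trace_add: "A \<in> carrier_mat m m \<Longrightarrow> B \<in> carrier_mat m m \<Longrightarrow> mat_trace (A + B) = mat_trace A + mat_trace B"
  by (simp add: mat_trace_def sum.distrib)

lemma trace_smult: "A \<in> carrier_mat m m \<Longrightarrow> mat_trace (c \<cdot>\<^sub>m A) = c * mat_trace A"
  by (simp add: mat_trace_def sum_distrib_left)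

lemma key_lemma:
  fixes Th Th' :: "'a \<Rightarrow> complex mat" and f :: "'a \<Rightarrow> 'a \<Rightarrow> 'a"
  assumes Nc: "\<forall>n\<in>N. Th n \<in> carrier_mat m m \<and> Th' n \<in> carrier_mat m m"
    and mul: "\<forall>a\<in>N. \<forall>b\<in>N. f a b \<in> N \<and> Th (f a b) = Th a * Th b \<and> Th' (f a b) = Th' a * Th' b"
    and u: "u \<in> N" "Th' u = 1\<^sub>m m"
    and tr: "\<forall>n\<in>N. mat_trace (Th n) = mat_trace (Th' n)"
    and irr: "irreducible_rep N m Th'"
    and P: "P \<in> carrier_mat m m" and orth: "\<forall>n\<in>N. mat_trace (P * Th n) = 0"
  shows "P = 0\<^sub>m m m"
proof -
  let ?J = "jspan m N Th Th'"
  have Jc: "X \<in> carrier_mat m m \<and> Y \<in> carrier_mat m m" if "(X, Y) \<in> ?J" for X Y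
    using that by (induction rule: jspan.induct) (use Nc in auto)
  have Jgen: "(X * Th n, Y * Th' n) \<in> ?J" if "(X, Y) \<in> ?J" "n \<in> N" for X Y n
    using that(1)
  proof (induction rule: jspan.induct)
    case (gen a)
    then show ?case using mul that(2) jspan.gen[where n="f a n" and N=N and m=m and Th=Th and Th'=Th'] by auto
  next
    case zero
    have "Th n \<in> carrier_mat m m" "Th' n \<in> carrier_mat m m" using Nc that(2) by auto
    hence "0\<^sub>m m m * Th n = 0\<^sub>m m m" "0\<^sub>m m m * Th' n = 0\<^sub>m m m" by auto
    then show ?case using jspan.zero by metis
  next
    case (add X Y X' Y')
    have "(X + X') * Th n = X * Th n + X' * Th n" "(Y + Y') * Th' n = Y * Th' n + Y' * Th' n"
      using Jc[OF add.hyps(1)] Jc[OF add.hyps(2)] Nc that(2) by (auto simp: add_mult_distrib_mat)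
    then show ?case using add.IH jspan.add by metis
  next
    case (smult X Y c)
    have "(c \<cdot>\<^sub>m X) * Th n = c \<cdot>\<^sub>m (X * Th n)" "(c \<cdot>\<^sub>m Y) * Th' n = c \<cdot>\<^sub>m (Y * Th' n)"
      using Jc[OF smult.hyps(1)] Nc that(2) by (auto simp: mult_smult_assoc_mat)
    then show ?case using smult.IH jspan.smult by metis
  qed
  have Jmul: "(X * X', Y * Y') \<in> ?J" if "(X, Y) \<in> ?J" "(X', Y') \<in> ?J" for X Y X' Y'
    using that(2)
  proof (induction rule: jspan.induct)
    case (gen n)
    then show ?case using Jgen[OF that(1)] by auto
  next
    case zero
    then show ?case using Jc[OF that(1)] jspan.zero by auto
  next
    case (add X1 Y1 X2 Y2)
    have "X * (X1 + X2) = X * X1 + X * X2" "Y * (Y1 + Y2) = Y * Y1 + Y * Y2"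
      using Jc[OF that(1)] Jc[OF add.hyps(1)] Jc[OF add.hyps(2)] by (auto simp: mult_add_distrib_mat)
    then show ?case using add.IH jspan.add by metis
  next
    case (smult X1 Y1 c)
    have "X * (c \<cdot>\<^sub>m X1) = c \<cdot>\<^sub>m (X * X1)" "Y * (c \<cdot>\<^sub>m Y1) = c \<cdot>\<^sub>m (Y * Y1)"
      using Jc[OF that(1)] Jc[OF smult.hyps(1)] by (auto simp: mult_smult_distrib)
    then show ?case using smult.IH jspan.smult by metis
  qed
  have Jtr: "mat_trace X = mat_trace Y" if "(X, Y) \<in> ?J" for X Y
    using that
  proof (induction rule: jspan.induct)
    case (gen n) then show ?case using tr by auto
  next
    case zero then show ?case by (simp add: mat_trace_def)
  next
    case (add X Y X' Y') then show ?case using Jc[OF add.hyps(1)] Jc[OF add.hyps(2)]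
      trace_add[of X m X'] trace_add[of Y m Y'] by simp
  next
    case (smult X Y c) then show ?case using Jc[OF smult.hyps(1)]
      trace_smult[of X m c] trace_smult[of Y m c] by simp
  qed
  have JP: "mat_trace (P * X) = 0" if "(X, Y) \<in> ?J" for X Y
    using that
  proof (induction rule: jspan.induct)
    case (gen n) then show ?case using orth by auto
  next
    case zero then show ?case using P by (simp add: mat_trace_def)
  next
    case (add X Y X' Y')
    have "P * (X + X') = P * X + P * X'" using P Jc[OF add.hyps(1)] Jc[OF add.hyps(2)] by (auto simp: mult_add_distrib_mat)
    then show ?case using add P Jc[OF add.hyps(1)] Jc[OF add.hyps(2)]
      trace_add[of "P * X" m "P * X'"] by simp
  next
    case (smult X Y c)
    have "P * (c \<cdot>\<^sub>m X) = c \<cdot>\<^sub>m (P * X)" using P Jc[OF smult.hyps(1)] by (auto simp: mult_smult_distrib)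
    then show ?case using smult P Jc[OF smult.hyps(1)] trace_smult[of "P * X" m c] by simp
  qed
  have m: "0 < m" using irr unfolding irreducible_rep_def by auto
  have ia: "irr_alg m (snd ` ?J)"
    unfolding irr_alg_def
  proof (intro conjI allI ballI impI)
    show "0 < m" by (rule m)
    show "snd ` ?J \<subseteq> carrier_mat m m" using Jc by auto
    show "1\<^sub>m m \<in> snd ` ?J" using jspan.gen[OF u(1)] u(2) by force
    show "0\<^sub>m m m \<in> snd ` ?J" using jspan.zero by force
    fix a b assume "a \<in> snd ` ?J" "b \<in> snd ` ?J"
    then obtain X X' where XX: "(X, a) \<in> ?J" "(X', b) \<in> ?J" by force
    have "(X + X', a + b) \<in> ?J" by (rule jspan.add[OF XX])
    thus "a + b \<in> snd ` ?J" by (rule image_eqI[rotated]) simp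
    have "(X * X', a * b) \<in> ?J" by (rule Jmul[OF XX])
    thus "a * b \<in> snd ` ?J" by (rule image_eqI[rotated]) simp
  next
    fix c a assume "a \<in> snd ` ?J"
    then obtain X where "(X, a) \<in> ?J" by force
    hence "(c \<cdot>\<^sub>m X, c \<cdot>\<^sub>m a) \<in> ?J" by (rule jspan.smult)
    thus "c \<cdot>\<^sub>m a \<in> snd ` ?J" by (rule image_eqI[rotated]) simp
  next
    fix W assume W: "W \<subseteq> carrier_vec m \<and> 0\<^sub>v m \<in> W \<and> (\<forall>v\<in>W. \<forall>w\<in>W. v + w \<in> W) \<and>
       (\<forall>c. \<forall>v\<in>W. c \<cdot>\<^sub>v v \<in> W) \<and> (\<forall>a\<in>snd ` ?J. \<forall>v\<in>W. a *\<^sub>v v \<in> W)"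
    have "\<forall>h\<in>N. \<forall>v\<in>W. Th' h *\<^sub>v v \<in> W"
    proof (intro ballI)
      fix h v assume "h \<in> N" "v \<in> W"
      moreover have "Th' h \<in> snd ` ?J" using jspan.gen[OF \<open>h \<in> N\<close>] by force
      ultimately show "Th' h *\<^sub>v v \<in> W" using W by blast
    qed
    hence "invariant_subspace N m Th' W" using W unfolding invariant_subspace_def by blast
    thus "W = {0\<^sub>v m} \<or> W = carrier_vec m" using irr unfolding irreducible_rep_def by blast
  qed
  define E where "E = (\<lambda>i j. mat m m (\<lambda>(p, q). if p = i \<and> q = j then 1 else 0) :: complex mat)"
  have Ec: "E i j \<in> carrier_mat m m" for i j unfolding E_def by auto
  have ex: "\<exists>X. (X, E i j) \<in> ?J" for i j using burnside[OF ia Ec[of i j]] by force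
  define F where "F = (\<lambda>i j. SOME X. (X, E i j) \<in> ?J)"
  have F: "(F i j, E i j) \<in> ?J" for i j unfolding F_def by (rule someI_ex[OF ex])
  have Etr: "mat_trace (E i j * E k l) = (if j = k \<and> i = l then 1 else 0)"
    if "i < m" "j < m" "k < m" "l < m" for i j k l
  proof -
    have "mat_trace (E i j * E k l) = (\<Sum>p<m. \<Sum>q<m. E i j $$ (p, q) * E k l $$ (q, p))"
      by (rule trace_prod[OF Ec Ec])
    also have "\<dots> = (\<Sum>p<m. \<Sum>q<m. if p = i \<and> q = j \<and> q = k \<and> p = l then 1 else 0)"
      by (rule sum.cong[OF refl], rule sum.cong[OF refl], auto simp: E_def)
    also have "\<dots> = (\<Sum>p<m. if p = i \<and> p = l then (if j = k then 1 else 0) else 0)"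
      by (rule sum.cong[OF refl]) (use that in auto)
    also have "\<dots> = (if j = k \<and> i = l then 1 else 0)" using that by auto
    finally show ?thesis .
  qed
  show ?thesis
  proof (rule counting[of m F])
    show "F i j \<in> carrier_mat m m" for i j using Jc[OF F] by auto
    show "mat_trace (F i j * F k l) = (if j = k \<and> i = l then 1 else 0)"
      if "i < m" "j < m" "k < m" "l < m" for i j k l
      using Jtr[OF Jmul[OF F F]] Etr[OF that] by simp
    show "P \<in> carrier_mat m m" by (rule P)
    show "mat_trace (P * F i j) = 0" for i j using JP[OF F] .
  qed
qed


lemma invertible_inv:
  fixes A :: "complex mat"
  assumes "A \<in> carrier_mat m m" "invertible_mat A"
  shows "\<exists>B \<in> carrier_mat m m. A * B = 1\<^sub>m m \<and> B * A = 1\<^sub>m m"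
proof -
  obtain B where B: "A * B = 1\<^sub>m (dim_row A)" "B * A = 1\<^sub>m (dim_row B)"
    using assms(2) unfolding invertible_mat_def inverts_mat_def by auto
  have "dim_col (A * B) = dim_col (1\<^sub>m (dim_row A) :: complex mat)" using B(1) by simp
  hence "dim_col B = m" using assms(1) by simp
  moreover have "dim_col (B * A) = dim_col (1\<^sub>m (dim_row B) :: complex mat)" using B(2) by simp
  hence "dim_row B = m" using assms(1) by simp
  ultimately show ?thesis using B assms(1) by (intro bexI[of _ B]) auto
qed

lemma idem_invertible:
  fixes A :: "complex mat"
  assumes A: "A \<in> carrier_mat m m" "invertible_mat A" and AA: "A * A = A"
  shows "A = 1\<^sub>m m"
proof -
  obtain B where B: "B \<in> carrier_mat m m" "A * B = 1\<^sub>m m" "B * A = 1\<^sub>m m"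
    using invertible_inv[OF A] by auto
  have "A = (B * A) * A" using A B by simp
  also have "\<dots> = B * (A * A)" by (rule assoc_mult_mat) (use A B in auto)
  also have "\<dots> = 1\<^sub>m m" using AA B by simp
  finally show ?thesis .
qed

lemma zero_not_invertible:
  assumes "0 < m" shows "\<not> invertible_mat (0\<^sub>m m m :: complex mat)"
proof
  assume inv: "invertible_mat (0\<^sub>m m m :: complex mat)"
  have "\<exists>B\<in>carrier_mat m m. 0\<^sub>m m m * B = 1\<^sub>m m \<and> B * 0\<^sub>m m m = (1\<^sub>m m :: complex mat)"
    by (rule invertible_inv) (use inv in auto)
  then obtain B where B: "B \<in> carrier_mat m m" "0\<^sub>m m m * B = (1\<^sub>m m :: complex mat)" by blast
  have "0\<^sub>m m m * B = (0\<^sub>m m m :: complex mat)" using B(1) by simp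
  hence "(0\<^sub>m m m :: complex mat) = 1\<^sub>m m" using B(2) by simp
  hence "(0\<^sub>m m m :: complex mat) $$ (0, 0) = (1\<^sub>m m :: complex mat) $$ (0, 0)" by simp
  thus False using assms by simp
qed

lemma trace_one: "mat_trace (1\<^sub>m m :: complex mat) = of_nat m"
  by (simp add: mat_trace_def)

lemma rep_one:
  assumes "group G" "subgroup N G" "cont_rep G T N m Th"
  shows "Th \<one>\<^bsub>G\<^esub> = 1\<^sub>m m"
proof -
  interpret group G by fact
  have u: "\<one>\<^bsub>G\<^esub> \<in> N" using subgroup.one_closed[OF assms(2)] .
  have "Th (\<one>\<^bsub>G\<^esub> \<otimes>\<^bsub>G\<^esub> \<one>\<^bsub>G\<^esub>) = Th \<one>\<^bsub>G\<^esub> * Th \<one>\<^bsub>G\<^esub>"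
    using assms(3) u unfolding cont_rep_def by blast
  hence AA: "Th \<one>\<^bsub>G\<^esub> * Th \<one>\<^bsub>G\<^esub> = Th \<one>\<^bsub>G\<^esub>" by simp
  have "Th \<one>\<^bsub>G\<^esub> \<in> carrier_mat m m" "invertible_mat (Th \<one>\<^bsub>G\<^esub>)"
    using assms(3) u unfolding cont_rep_def by auto
  thus ?thesis using idem_invertible AA by blast
qed

lemma lin_nonzero:
  assumes "Lin G T \<psi>" "y \<in> carrier G"
  shows "\<psi> y \<noteq> 0"
proof
  assume z: "\<psi> y = 0"
  obtain Psi where P: "cont_rep G T (carrier G) 1 Psi" "affords (carrier G) Psi \<psi>"
    using assms(1) unfolding Lin_def by auto
  have c: "Psi y \<in> carrier_mat 1 1" "invertible_mat (Psi y)" using P(1) assms(2) unfolding cont_rep_def by auto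
  have "Psi y $$ (0, 0) = 0" using P(2) assms(2) z unfolding affords_def mat_trace_def using c by auto
  hence "Psi y = 0\<^sub>m 1 1" using c by (intro eq_matI) auto
  thus False using c zero_not_invertible[of 1] by auto
qed

lemma (in group) main_aux:
  fixes T :: "'a topology"
    and N K :: "'a set" and \<theta> \<theta>h :: "'a \<Rightarrow> complex"
  assumes "N \<lhd> G" and "openin T N"
    and "Irr G T N \<theta>"
    and "subgroup K G" and "N \<subseteq> K" and "K \<subseteq> Stab G N \<theta>"
    and "strong_ext G T N K \<theta> \<theta>h"
  shows "(\<forall>x \<in> K. \<exists>n \<in> N. \<theta>h (x \<otimes> n) \<noteq> 0) \<and>
    (\<forall>L. subgroup L G \<and> N \<subseteq> L \<and> L \<subseteq> Stab_twist G T N \<theta> \<and>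
         (\<forall>g \<in> L. (\<lambda>x. g \<otimes> x \<otimes> inv g) ` K = K) \<longrightarrow>
      (\<forall>g g' \<psi> \<psi>' \<mu> \<mu>'.
         g \<in> L \<and> g' \<in> L \<and> g <# N = g' <# N \<and>
         Lin G T \<psi> \<and> Lin G T \<psi>' \<and> (\<forall>x \<in> K. \<psi> x = \<psi>' x) \<and>
         (\<forall>n \<in> N. conjf G g \<theta> n = \<theta> n * \<psi> n) \<and>
         (\<forall>n \<in> N. conjf G g' \<theta> n = \<theta> n * \<psi>' n) \<and>
         (\<forall>x \<in> K. \<mu> x \<noteq> 0 \<and> (\<forall>n \<in> N. \<mu> (x \<otimes> n) = \<mu> x)) \<and>
         (\<forall>x \<in> K. \<mu>' x \<noteq> 0 \<and> (\<forall>n \<in> N. \<mu>' (x \<otimes> n) = \<mu>' x)) \<and>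
         (\<forall>x \<in> K. conjf G g \<theta>h x = \<theta>h x * \<psi> x * \<mu> x) \<and>
         (\<forall>x \<in> K. conjf G g' \<theta>h x = \<theta>h x * \<psi>' x * \<mu>' x)
       \<longrightarrow> (\<forall>x \<in> K. \<mu> x = \<mu>' x)))"
proof -
  have grp: "group G" by (rule is_group)
  have NG: "subgroup N G" using normal_imp_subgroup[OF assms(1)] .
  have KG: "subgroup K G" by fact
  have NK: "N \<subseteq> K" by fact
  obtain m' Th' where Th': "cont_rep G T N m' Th'" "irreducible_rep N m' Th'" "affords N Th' \<theta>"
    using assms(3) unfolding Irr_def by auto
  obtain m Th Prj where Th: "cont_rep G T N m Th" "affords N Th \<theta>"
      and se: "strong_ext_rep G N K m Th Prj" and th: "\<forall>x\<in>K. \<theta>h x = mat_trace (Prj x)"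
    using assms(7) unfolding strong_ext_def by auto
  obtain \<alpha> where pr: "proj_rep G K m Prj \<alpha>" using se unfolding strong_ext_rep_def by auto
  have ext1: "\<And>x n. x \<in> K \<Longrightarrow> n \<in> N \<Longrightarrow> Prj (x \<otimes> n) = Prj x * Th n"
    and ext2: "\<And>x n. x \<in> K \<Longrightarrow> n \<in> N \<Longrightarrow> Prj (n \<otimes> x) = Th n * Prj x"
    using se unfolding strong_ext_rep_def by auto
  have Prjc: "\<And>x. x \<in> K \<Longrightarrow> Prj x \<in> carrier_mat m m \<and> invertible_mat (Prj x)"
    using pr unfolding proj_rep_def by auto
  have Thc: "\<And>n. n \<in> N \<Longrightarrow> Th n \<in> carrier_mat m m" using Th(1) unfolding cont_rep_def by auto
  have Thm: "\<And>a b. a \<in> N \<Longrightarrow> b \<in> N \<Longrightarrow> Th (a \<otimes> b) = Th a * Th b" using Th(1) unfolding cont_rep_def by auto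
  have one1: "Th \<one> = 1\<^sub>m m" by (rule rep_one[OF grp NG Th(1)])
  have one2: "Th' \<one> = 1\<^sub>m m'" by (rule rep_one[OF grp NG Th'(1)])
  have u: "\<one> \<in> N" using subgroup.one_closed[OF NG] .
  have t1: "\<theta> \<one> = mat_trace (Th \<one>)" "\<theta> \<one> = mat_trace (Th' \<one>)"
    using Th(2) Th'(3) u unfolding affords_def by auto
  have "of_nat m = (of_nat m' :: complex)"
    using t1 unfolding one1 one2 trace_one by simp
  hence mm: "m' = m" by simp
  have m0: "0 < m" using Th'(2) mm unfolding irreducible_rep_def by auto
  have part1: "\<forall>x \<in> K. \<exists>n \<in> N. \<theta>h (x \<otimes> n) \<noteq> 0"
  proof (rule ballI, rule ccontr)
    fix x assume x: "x \<in> K" and "\<not> (\<exists>n\<in>N. \<theta>h (x \<otimes> n) \<noteq> 0)"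
    hence z: "\<forall>n\<in>N. \<theta>h (x \<otimes> n) = 0" by auto
    have orth: "\<forall>n\<in>N. mat_trace (Prj x * Th n) = 0"
    proof
      fix n assume n: "n \<in> N"
      have "x \<otimes> n \<in> K" using subgroup.m_closed[OF KG x] n NK by auto
      thus "mat_trace (Prj x * Th n) = 0" using z n th ext1[OF x n] by auto
    qed
    have "Prj x = 0\<^sub>m m m"
    proof (rule key_lemma[where f = "(\<otimes>)" and u = "\<one>" and Th = Th and Th' = Th' and N = N])
      show "\<forall>n\<in>N. Th n \<in> carrier_mat m m \<and> Th' n \<in> carrier_mat m m"
        using Thc Th'(1) mm unfolding cont_rep_def by auto
      show "\<forall>a\<in>N. \<forall>b\<in>N. a \<otimes> b \<in> N \<and> Th (a \<otimes> b) = Th a * Th b \<and> Th' (a \<otimes> b) = Th' a * Th' b"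
        using subgroup.m_closed[OF NG] Thm Th'(1) unfolding cont_rep_def by auto
      show "\<one> \<in> N" by (rule u)
      show "Th' \<one> = 1\<^sub>m m" using one2 mm by simp
      show "\<forall>n\<in>N. mat_trace (Th n) = mat_trace (Th' n)" using Th(2) Th'(3) unfolding affords_def by auto
      show "irreducible_rep N m Th'" using Th'(2) mm by simp
      show "Prj x \<in> carrier_mat m m" using Prjc[OF x] by auto
      show "\<forall>n\<in>N. mat_trace (Prj x * Th n) = 0" by (rule orth)
    qed
    thus False using Prjc[OF x] zero_not_invertible[OF m0] by auto
  qed
  show ?thesis
  proof (intro conjI part1 allI impI ballI)
    fix L g g' \<psi> \<psi>' \<mu> \<mu>' x
    assume L: "subgroup L G \<and> N \<subseteq> L \<and> L \<subseteq> Stab_twist G T N \<theta> \<and>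
         (\<forall>g \<in> L. (\<lambda>x. g \<otimes> x \<otimes> inv g) ` K = K)"
    assume H: "g \<in> L \<and> g' \<in> L \<and> g <# N = g' <# N \<and>
         Lin G T \<psi> \<and> Lin G T \<psi>' \<and> (\<forall>x \<in> K. \<psi> x = \<psi>' x) \<and>
         (\<forall>n \<in> N. conjf G g \<theta> n = \<theta> n * \<psi> n) \<and>
         (\<forall>n \<in> N. conjf G g' \<theta> n = \<theta> n * \<psi>' n) \<and>
         (\<forall>x \<in> K. \<mu> x \<noteq> 0 \<and> (\<forall>n \<in> N. \<mu> (x \<otimes> n) = \<mu> x)) \<and>
         (\<forall>x \<in> K. \<mu>' x \<noteq> 0 \<and> (\<forall>n \<in> N. \<mu>' (x \<otimes> n) = \<mu>' x)) \<and>
         (\<forall>x \<in> K. conjf G g \<theta>h x = \<theta>h x * \<psi> x * \<mu> x) \<and>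
         (\<forall>x \<in> K. conjf G g' \<theta>h x = \<theta>h x * \<psi>' x * \<mu>' x)"
    assume x: "x \<in> K"
    have LG: "subgroup L G" using L by auto
    have g: "g \<in> L" "g' \<in> L" using H by auto
    have gc: "g \<in> carrier G" "g' \<in> carrier G" using g subgroup.subset[OF LG] by auto
    have Nc: "N \<subseteq> carrier G" using subgroup.subset[OF NG] .
    have Kc: "K \<subseteq> carrier G" using subgroup.subset[OF KG] .
    have "g' \<in> g' <# N" unfolding l_coset_def using u gc by force
    hence "g' \<in> g <# N" using H by simp
    then obtain n0 where n0: "n0 \<in> N" "g' = g \<otimes> n0" unfolding l_coset_def by auto
    have n0c: "n0 \<in> carrier G" using n0 Nc by auto
    have ginvL: "inv g \<in> L" using subgroup.m_inv_closed[OF LG g(1)] .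
    have conjK: "inv g \<otimes> y \<otimes> g \<in> K" if y: "y \<in> K" for y
    proof -
      have "(\<lambda>x. inv g \<otimes> x \<otimes> inv (inv g)) ` K = K" using L ginvL by blast
      hence "inv g \<otimes> y \<otimes> inv (inv g) \<in> K" using y by blast
      thus ?thesis using gc by simp
    qed
    have ceq: "conjf G g' \<theta>h y = conjf G g \<theta>h y" if y: "y \<in> K" for y
    proof -
      define z where "z = inv g \<otimes> y \<otimes> g"
      have zK: "z \<in> K" unfolding z_def using conjK[OF y] .
      have yc: "y \<in> carrier G" using y Kc by auto
      have zc: "z \<in> carrier G" using zK Kc by auto
      have n0i: "inv n0 \<in> N" using subgroup.m_inv_closed[OF NG n0(1)] .
      have zn: "z \<otimes> n0 \<in> K" using subgroup.m_closed[OF KG zK] n0(1) NK by auto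
      have "inv g' \<otimes> y \<otimes> g' = inv n0 \<otimes> (z \<otimes> n0)"
        unfolding n0(2) z_def using gc n0c yc by (simp add: inv_mult_group m_assoc)
      hence "conjf G g' \<theta>h y = \<theta>h (inv n0 \<otimes> (z \<otimes> n0))" unfolding conjf_def by simp
      also have "\<dots> = mat_trace (Prj (inv n0 \<otimes> (z \<otimes> n0)))"
        using th subgroup.m_closed[OF KG _ zn] n0i NK by auto
      also have "\<dots> = mat_trace (Th (inv n0) * (Prj z * Th n0))"
        using ext2[OF zn n0i] ext1[OF zK n0(1)] by simp
      also have "\<dots> = mat_trace ((Prj z * Th n0) * Th (inv n0))"
        by (rule trace_comm[of _ m]) (use Thc[OF n0i] Prjc[OF zK] Thc[OF n0(1)] in auto)
      also have "Prj z * Th n0 * Th (inv n0) = Prj z * (Th n0 * Th (inv n0))"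
        by (rule assoc_mult_mat) (use Thc[OF n0i] Prjc[OF zK] Thc[OF n0(1)] in auto)
      also have "Th n0 * Th (inv n0) = 1\<^sub>m m"
        using Thm[OF n0(1) n0i] n0c one1 by simp
      also have "mat_trace (Prj z * 1\<^sub>m m) = \<theta>h z" using conjunct1[OF Prjc[OF zK]] th zK by simp
      also have "\<theta>h z = conjf G g \<theta>h y" unfolding conjf_def z_def ..
      finally show ?thesis .
    qed
    obtain n where n: "n \<in> N" "\<theta>h (x \<otimes> n) \<noteq> 0" using part1 x by auto
    define y where "y = x \<otimes> n"
    have yK: "y \<in> K" unfolding y_def using subgroup.m_closed[OF KG x] n NK by auto
    have "\<theta>h y * \<psi> y * \<mu> y = \<theta>h y * \<psi>' y * \<mu>' y" using H ceq[OF yK] yK by auto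
    moreover have "\<psi> y = \<psi>' y" using H yK by auto
    moreover have "\<psi> y \<noteq> 0" using lin_nonzero[of G T \<psi> y] H yK Kc by auto
    moreover have "\<theta>h y \<noteq> 0" using n unfolding y_def by simp
    ultimately have "\<mu> y = \<mu>' y" by simp
    thus "\<mu> x = \<mu>' x" using H x n unfolding y_def by auto
  qed
qed


theorem lemma2p6:
  fixes G :: "('a, 'b) monoid_scheme" and T :: "'a topology"
    and N K :: "'a set" and \<theta> \<theta>h :: "'a \<Rightarrow> complex"
  assumes "profinite_group G T"
    and "N \<lhd> G" and "openin T N"
    and "Irr G T N \<theta>"
    and "subgroup K G" and "N \<subseteq> K" and "K \<subseteq> Stab G N \<theta>"
    and "strong_ext G T N K \<theta> \<theta>h"
  shows "(\<forall>x \<in> K. \<exists>n \<in> N. \<theta>h (x \<otimes>\<^bsub>G\<^esub> n) \<noteq> 0) \<and>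
    (\<forall>L. subgroup L G \<and> N \<subseteq> L \<and> L \<subseteq> Stab_twist G T N \<theta> \<and>
         (\<forall>g \<in> L. (\<lambda>x. g \<otimes>\<^bsub>G\<^esub> x \<otimes>\<^bsub>G\<^esub> inv\<^bsub>G\<^esub> g) ` K = K) \<longrightarrow>
      (\<forall>g g' \<psi> \<psi>' \<mu> \<mu>'.
         g \<in> L \<and> g' \<in> L \<and> g <#\<^bsub>G\<^esub> N = g' <#\<^bsub>G\<^esub> N \<and>
         Lin G T \<psi> \<and> Lin G T \<psi>' \<and> (\<forall>x \<in> K. \<psi> x = \<psi>' x) \<and>
         (\<forall>n \<in> N. conjf G g \<theta> n = \<theta> n * \<psi> n) \<and>
         (\<forall>n \<in> N. conjf G g' \<theta> n = \<theta> n * \<psi>' n) \<and>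
         (\<forall>x \<in> K. \<mu> x \<noteq> 0 \<and> (\<forall>n \<in> N. \<mu> (x \<otimes>\<^bsub>G\<^esub> n) = \<mu> x)) \<and>
         (\<forall>x \<in> K. \<mu>' x \<noteq> 0 \<and> (\<forall>n \<in> N. \<mu>' (x \<otimes>\<^bsub>G\<^esub> n) = \<mu>' x)) \<and>
         (\<forall>x \<in> K. conjf G g \<theta>h x = \<theta>h x * \<psi> x * \<mu> x) \<and>
         (\<forall>x \<in> K. conjf G g' \<theta>h x = \<theta>h x * \<psi>' x * \<mu>' x)
       \<longrightarrow> (\<forall>x \<in> K. \<mu> x = \<mu>' x)))"
proof -
  have grp: "group G" using assms(1) unfolding profinite_group_def by auto
  show ?thesis by (rule group.main_aux[OF grp assms(2-8)])
qed

end
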